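(* Let $n\ge 2$ be an integer, $A\subseteq L_n$, and let $B\subseteq L_n\setminus A$ be a closed uncountable subset of $(L_n,\tau_E|_{L_n})$ (for example, a subset homeomorphic to the Cantor set). Then $(X_n,\tau(A))$ is not Lindelöf.
   Context: For $\overline{x},\overline{a}\in\mathbb R^n$ let $|\overline{x}-\overline{a}|$ be the Euclidean distance and $B(\overline{a},\epsilon)=\{\overline{x}\in\mathbb R^n:|\overline{x}-\overline{a}|<\epsilon\}$. Let $P_n=\{\overline{x}\in\mathbb R^n: x_n>0\}$, $L_n=\{\overline{x}\in\mathbb R^n: x_n=0\}$, $X_n=P_n\cup L_n$, and let $\tau_E$ denote the Euclidean topology on $X_n$. For $\overline{a}\in L_n$ and $\epsilon>0$ put $\overline{a(\epsilon)}=(a_1,\dots,a_{n-1},\epsilon)$ and $\tilde B(\overline{a},\epsilon)=\{\overline{a}\}\cup B(\overline{a(\epsilon)},\epsilon)$. For $A\subseteq L_n$, the topology $\tau(A)$ on $X_n$ is generated by the local bases: at $\overline{a}\in P_n$, the sets $B(\overline{a},\epsilon)$ with $0<\epsilon<a_n$; at $\overline{a}\in A$, the sets $B(\overline{a},\epsilon)\cap X_n$ with $\epsilon>0$; at $\overline{a}\in L_n\setminus A$, the sets $\tilde B(\overline{a},\epsilon)$ with $\epsilon>0$. *)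

theory Defs
  imports "HOL-Analysis.Analysis"
begin

text \<open>Points of R^n are vectors of type real^'n; the distinguished index k plays
the role of the last coordinate x_n.\<close>

definition Pn :: "'n::finite \<Rightarrow> (real^'n) set" where
  "Pn k = {x. x $ k > 0}"

definition Ln :: "'n::finite \<Rightarrow> (real^'n) set" where
  "Ln k = {x. x $ k = 0}"

definition Xn :: "'n::finite \<Rightarrow> (real^'n) set" where
  "Xn k = Pn k \<union> Ln k"

definition lift :: "'n::finite \<Rightarrow> real^'n \<Rightarrow> real \<Rightarrow> real^'n" where
  "lift k a e = (\<chi> i. if i = k then e else a $ i)"

definition tauA :: "'n::finite \<Rightarrow> (real^'n) set \<Rightarrow> (real^'n) topology" where
  "tauA k A = topology_generated_by
     ({ball a e | a e. a \<in> Pn k \<and> 0 < e \<and> e < a $ k}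
      \<union> {ball a e \<inter> Xn k | a e. a \<in> A \<and> 0 < e}
      \<union> {insert a (ball (lift k a e) e) | a e. a \<in> Ln k - A \<and> 0 < e})"

end

theory Submission
  imports Defs
begin

lemma lift_ball_pos:
  assumes "y \<in> ball (lift k a e) e"
  shows "y $ k > 0"
proof -
  have "\<bar>(lift k a e - y) $ k\<bar> \<le> norm (lift k a e - y)" by (rule component_le_norm_cart)
  also have "\<dots> < e" using assms by (simp add: dist_norm)
  finally have "\<bar>e - y $ k\<bar> < e" by (simp add: lift_def)
  then show ?thesis by linarith
qed

lemma ball_pos_gen:
  assumes "y \<in> ball x e" "e \<le> x $ k"
  shows "y $ k > 0"
proof -
  have "\<bar>(x - y) $ k\<bar> \<le> norm (x - y)" by (rule component_le_norm_cart)
  also have "\<dots> < e" using assms by (simp add: dist_norm)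
  finally have "\<bar>x $ k - y $ k\<bar> < e" by simp
  then show ?thesis using assms(2) by linarith
qed

lemma ball_pos:
  assumes "y \<in> ball x (x $ k / 2)" "x $ k > 0"
  shows "y $ k > 0"
  using ball_pos_gen[OF assms(1)] assms(2) by simp

theorem mainTheorem14:
  fixes k :: "'n::finite" and A B :: "(real^'n) set"
  assumes "CARD('n) \<ge> 2"
    and "A \<subseteq> Ln k"
    and "B \<subseteq> Ln k - A"
    and "closedin (top_of_set (Ln k)) B"
    and "uncountable B"
  shows "\<not> Lindelof_space (tauA k A)"
proof
  assume L: "Lindelof_space (tauA k A)"
  define S where "S = ({ball a e | a e. a \<in> Pn k \<and> 0 < e \<and> e < a $ k}
      \<union> {ball a e \<inter> Xn k | a e. a \<in> A \<and> 0 < e}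
      \<union> {insert a (ball (lift k a e) e) | a e. a \<in> Ln k - A \<and> 0 < e})"
  have tau: "tauA k A = topology_generated_by S" unfolding tauA_def S_def ..
  have top: "topspace (tauA k A) = \<Union>S" unfolding tau by simp
  have gen: "openin (tauA k A) G" if "G \<in> S" for G
    unfolding tau using that by (rule topology_generated_by_Basis)
  define T where "T b = insert b (ball (lift k b 1) 1)" for b
  have TS: "T b \<in> S" if "b \<in> B" for b
  proof -
    have "b \<in> Ln k - A" using that assms(3) by blast
    then have "T b \<in> {insert a (ball (lift k a e) e) | a e. a \<in> Ln k - A \<and> 0 < e}"
      unfolding T_def by (rule_tac CollectI, rule_tac exI[of _ b], rule_tac exI[of _ "1::real"]) simp
    then show ?thesis unfolding S_def by (rule UnI2)
  qed
  have TB: "T b \<inter> B \<subseteq> {b}" for b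
  proof
    fix y assume "y \<in> T b \<inter> B"
    moreover have "y \<notin> ball (lift k b 1) 1" if "y \<in> B"
      using that assms(3) lift_ball_pos[of y k b 1] unfolding Ln_def by force
    ultimately show "y \<in> {b}" unfolding T_def by auto
  qed
  have BLn: "openin (top_of_set (Ln k)) (Ln k - B)"
    using assms(4) by (simp add: closedin_def)
  have opc: "openin (tauA k A) (\<Union>S - B)"
  proof (subst openin_subopen, intro ballI)
    fix x assume x: "x \<in> \<Union>S - B"
    have "\<exists>G\<in>S. x \<in> G \<and> G \<inter> B = {}"
    proof (cases "x $ k > 0")
      case True
      have "ball x (x $ k / 2) \<in> {ball a e | a e. a \<in> Pn k \<and> 0 < e \<and> e < a $ k}"
        using True unfolding Pn_def by (rule_tac CollectI, rule_tac exI[of _ x], rule_tac exI[of _ "x $ k / 2"]) simp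
      then have "ball x (x $ k / 2) \<in> S" unfolding S_def by (intro UnI1)
      moreover have "ball x (x $ k / 2) \<inter> B = {}"
        using ball_pos[OF _ True] assms(3) unfolding Ln_def by fastforce
      moreover have "x \<in> ball x (x $ k / 2)" using True by simp
      ultimately show ?thesis by blast
    next
      case False
      have xL: "x \<in> Ln k"
      proof -
        obtain G where G: "G \<in> S" "x \<in> G" using x by blast
        have "x \<notin> ball a e" if "e < a $ k" for a e using ball_pos_gen[of x a e k] that False by auto
        moreover have "x \<notin> ball (lift k a e) e" for a e using lift_ball_pos[of x k a e] False by auto
        ultimately show ?thesis using G False assms(2) unfolding S_def Xn_def Pn_def Ln_def by auto
      qed
      with x BLn obtain e where e: "e > 0" "\<And>x'. x' \<in> Ln k \<Longrightarrow> dist x' x < e \<Longrightarrow> x' \<in> Ln k - B"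
        unfolding openin_euclidean_subtopology_iff by blast
      show ?thesis
      proof (cases "x \<in> A")
        case True
        have "ball x e \<inter> Xn k \<in> {ball a e \<inter> Xn k | a e. a \<in> A \<and> 0 < e}"
          using True e by (rule_tac CollectI, rule_tac exI[of _ x], rule_tac exI[of _ e]) simp
        then have "ball x e \<inter> Xn k \<in> S" unfolding S_def by (rule UnI1[OF UnI2])
        moreover have "ball x e \<inter> Xn k \<inter> B = {}"
          using e(2) assms(3) by (auto simp: dist_commute)
        moreover have "x \<in> ball x e \<inter> Xn k" using e xL unfolding Xn_def by simp
        ultimately show ?thesis by blast
      next
        case nA: False
        have "insert x (ball (lift k x e) e) \<in> {insert a (ball (lift k a e) e) | a e. a \<in> Ln k - A \<and> 0 < e}"
          using nA xL e by (rule_tac CollectI, rule_tac exI[of _ x], rule_tac exI[of _ e]) simp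
        then have "insert x (ball (lift k x e) e) \<in> S" unfolding S_def by (rule UnI2)
        moreover have "insert x (ball (lift k x e) e) \<inter> B = {}"
          using x assms(3) lift_ball_pos[of _ k x e] unfolding Ln_def by fastforce
        moreover have "x \<in> insert x (ball (lift k x e) e)" by simp
        ultimately show ?thesis by blast
      qed
    qed
    then obtain G where "G \<in> S" "x \<in> G" "G \<inter> B = {}" by blast
    then show "\<exists>T. openin (tauA k A) T \<and> x \<in> T \<and> T \<subseteq> \<Union>S - B"
      using gen by blast
  qed
  define U where "U = insert (\<Union>S - B) (T ` B)"
  have Uo: "\<forall>W\<in>U. openin (tauA k A) W" using opc gen TS unfolding U_def by blast
  have Uu: "\<Union>U = topspace (tauA k A)"
  proof
    show "\<Union>U \<subseteq> topspace (tauA k A)" unfolding top U_def using TS by blast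
    show "topspace (tauA k A) \<subseteq> \<Union>U" unfolding top U_def T_def by blast
  qed
  obtain V where V: "countable V" "V \<subseteq> U" "\<Union>V = topspace (tauA k A)"
    using Lindelof_spaceD[OF L _ Uu] Uo by blast
  have Btop: "B \<subseteq> \<Union>S" using TS unfolding T_def by blast
  have "B \<subseteq> (\<Union>W\<in>V. W \<inter> B)" using V(3) Btop top by auto
  also have "\<dots> = (\<Union>W\<in>V - {\<Union>S - B}. W \<inter> B)" by auto
  finally have sub: "B \<subseteq> (\<Union>W\<in>V - {\<Union>S - B}. W \<inter> B)" .
  have "countable (\<Union>W\<in>V - {\<Union>S - B}. W \<inter> B)"
  proof (rule countable_UN)
    show "countable (V - {\<Union>S - B})" using V(1) by simp
    fix W assume "W \<in> V - {\<Union>S - B}"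
    then obtain b where "W = T b" using V(2) unfolding U_def by blast
    have "countable (T b \<inter> B)" by (rule countable_subset[OF TB[of b]]) simp
    then show "countable (W \<inter> B)" using \<open>W = T b\<close> by simp
  qed
  then have "countable B" using sub by (rule countable_subset[rotated])
  then show False using assms(5) by simp
qed

end
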